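(* Let $G$ consist of two parallel paths $P_1,P_2$ from $s$ to $d$ with $l_{P_1}<l_{P_2}$. Suppose the dynamics is governed by the linear decision rule, that the exogenous inputs are constant and positive, $f_s(t)=\bar f>0$ and $b_d(t)=\bar b>0$ for all $t\ge 0$, and that the initial pheromone level $p_{uv}(0)$ is positive for every edge $(u,v)\in P_1$ (the initial pheromone levels on $P_2$ and all initial flows at internal vertices are arbitrary nonnegative numbers). Then there exist constants $C_1,C_2>0$, depending on $\delta,\bar f,\bar b$, the leakage parameters, the path lengths and the initial configuration, but not on $\epsilon$, such that for every $\epsilon\in(0,1)$ and every integer $t\ge C_1+C_2\log(1/\epsilon)$ we have $\nu^f_{uv}(t)\ge 1-\epsilon$ and $\nu^b_{uv}(t)\ge 1-\epsilon$ for every edge $(u,v)\in P_1$.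
   Context: Model. $G=(V,E)$ is a finite directed graph with a source vertex $s$ and a destination vertex $d$. Time is discrete, $t=0,1,2,\dots$. The state at time $t$ consists of pheromone levels $p_{uv}(t)\ge 0$ for $(u,v)\in E$, forward flows $f_v(t)\ge 0$ and backward flows $b_v(t)\ge0$ for $v\in V$. Each vertex $v$ has a leakage parameter $l_v\in[0,1]$, and $\delta\in(0,1)$ is a fixed decay parameter. The values $f_s(t)$ and $b_d(t)$ are exogenous inputs (the flow newly appearing at $s$ and at $d$ at time $t$); all other flows are determined by the dynamics from the initial state. Linear decision rule: $f_{uv}(t)=f_u(t)\,p_{uv}(t)/\sum_{z:(u,z)\in E}p_{uz}(t)$ and $b_{uv}(t)=b_v(t)\,p_{uv}(t)/\sum_{z:(z,v)\in E}p_{zv}(t)$, with the convention that at a vertex with a single outgoing (resp. incoming) edge the entire forward (resp. backward) flow is sent along that edge. Updates: for $v\neq s$, $f_v(t+1)=(1-l_v)\sum_{z:(z,v)\in E}f_{zv}(t)$; for $u\ne d$, $b_u(t+1)=(1-l_u)\sum_{z:(u,z)\in E}b_{uz}(t)$; and $p_{uv}(t+1)=\delta\,(p_{uv}(t)+f_{uv}(t)+b_{uv}(t))$ for all $(u,v)\in E$. Normalized pheromone levels: $\nu^f_{uv}(t)=p_{uv}(t)/\sum_{z:(u,z)\in E}p_{uz}(t)$ and $\nu^b_{uv}(t)=p_{uv}(t)/\sum_{z:(z,v)\in E}p_{zv}(t)$. For a path $P$ from $s$ to $d$, its leakage is $l_P=1-\prod_{v\in P\setminus\{s,d\}}(1-l_v)$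 and its length $\mathrm{len}(P)$ is its number of edges. Two parallel paths: $G$ is the union of two directed paths $P_1,P_2$ from $s$ to $d$ that share no vertices other than $s$ and $d$. *)

theory Defs
  imports Complex_Main
begin

definition path_edges :: "'v list \<Rightarrow> ('v \<times> 'v) set" where
  "path_edges P = set (zip P (tl P))"

definition is_path :: "('v \<times> 'v) set \<Rightarrow> 'v \<Rightarrow> 'v \<Rightarrow> 'v list \<Rightarrow> bool" where
  "is_path E s d P \<longleftrightarrow> length P \<ge> 2 \<and> distinct P \<and> hd P = s \<and> last P = d
     \<and> path_edges P \<subseteq> E"

definition two_parallel_paths :: "('v \<times> 'v) set \<Rightarrow> 'v \<Rightarrow> 'v \<Rightarrow> 'v list \<Rightarrow> 'v list \<Rightarrow> bool" where
  "two_parallel_paths E s d P1 P2 \<longleftrightarrow>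
     s \<noteq> d \<and> is_path E s d P1 \<and> is_path E s d P2 \<and> P1 \<noteq> P2 \<and>
     set P1 \<inter> set P2 = {s, d} \<and> E = path_edges P1 \<union> path_edges P2"

definition path_leakage :: "('v \<Rightarrow> real) \<Rightarrow> 'v \<Rightarrow> 'v \<Rightarrow> 'v list \<Rightarrow> real" where
  "path_leakage l s d P = 1 - (\<Prod>v\<in>set P - {s, d}. (1 - l v))"

definition out_nbrs :: "('v \<times> 'v) set \<Rightarrow> 'v \<Rightarrow> 'v set" where
  "out_nbrs E u = {z. (u, z) \<in> E}"

definition in_nbrs :: "('v \<times> 'v) set \<Rightarrow> 'v \<Rightarrow> 'v set" where
  "in_nbrs E v = {z. (z, v) \<in> E}"

definition nu_f :: "('v \<times> 'v) set \<Rightarrow> ('v \<times> 'v \<Rightarrow> real) \<Rightarrow> 'v \<Rightarrow> 'v \<Rightarrow> real" where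
  "nu_f E p u v = p (u, v) / (\<Sum>z\<in>out_nbrs E u. p (u, z))"

definition nu_b :: "('v \<times> 'v) set \<Rightarrow> ('v \<times> 'v \<Rightarrow> real) \<Rightarrow> 'v \<Rightarrow> 'v \<Rightarrow> real" where
  "nu_b E p u v = p (u, v) / (\<Sum>z\<in>in_nbrs E v. p (z, v))"

text \<open>Linear decision rule, with the convention that at a vertex with a single
  outgoing (resp. incoming) edge the entire flow is sent along that edge.\<close>
definition fwd_edge_flow :: "('v \<times> 'v) set \<Rightarrow> ('v \<times> 'v \<Rightarrow> real) \<Rightarrow> ('v \<Rightarrow> real) \<Rightarrow> 'v \<Rightarrow> 'v \<Rightarrow> real" where
  "fwd_edge_flow E p f u v =
     (if card (out_nbrs E u) = 1 then f u else f u * nu_f E p u v)"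

definition bwd_edge_flow :: "('v \<times> 'v) set \<Rightarrow> ('v \<times> 'v \<Rightarrow> real) \<Rightarrow> ('v \<Rightarrow> real) \<Rightarrow> 'v \<Rightarrow> 'v \<Rightarrow> real" where
  "bwd_edge_flow E p b u v =
     (if card (in_nbrs E v) = 1 then b v else b v * nu_b E p u v)"

definition ant_dynamics ::
  "('v \<times> 'v) set \<Rightarrow> 'v \<Rightarrow> 'v \<Rightarrow> ('v \<Rightarrow> real) \<Rightarrow> real \<Rightarrow> (nat \<Rightarrow> real) \<Rightarrow> (nat \<Rightarrow> real)
   \<Rightarrow> (nat \<Rightarrow> 'v \<times> 'v \<Rightarrow> real) \<Rightarrow> (nat \<Rightarrow> 'v \<Rightarrow> real) \<Rightarrow> (nat \<Rightarrow> 'v \<Rightarrow> real) \<Rightarrow> bool" where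
  "ant_dynamics E s d l \<delta> fin bin p f b \<longleftrightarrow>
     (\<forall>e\<in>E. p 0 e \<ge> 0) \<and> (\<forall>v. f 0 v \<ge> 0) \<and> (\<forall>v. b 0 v \<ge> 0) \<and>
     (\<forall>t. f t s = fin t) \<and> (\<forall>t. b t d = bin t) \<and>
     (\<forall>t v. v \<noteq> s \<longrightarrow>
        f (Suc t) v = (1 - l v) * (\<Sum>z\<in>in_nbrs E v. fwd_edge_flow E (p t) (f t) z v)) \<and>
     (\<forall>t u. u \<noteq> d \<longrightarrow>
        b (Suc t) u = (1 - l u) * (\<Sum>z\<in>out_nbrs E u. bwd_edge_flow E (p t) (b t) u z)) \<and>
     (\<forall>t. \<forall>(u, v)\<in>E.
        p (Suc t) (u, v) = \<delta> * (p t (u, v) + fwd_edge_flow E (p t) (f t) u v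
                                           + bwd_edge_flow E (p t) (b t) u v))"

end

theory Submission
  imports Defs
begin


lemma step_ratio:
  fixes A B Ck Dk Cm Dm H V M fb bb q1 q2 \<delta> a0 W :: real
  assumes A: "A > 0" and B: "B \<ge> 0" and Ck: "Ck > 0" and Dk: "Dk \<ge> 0"
    and Cm: "Cm > 0" and Dm: "Dm \<ge> 0"
    and rH: "B / A \<le> H" and kH: "Dk / Ck \<le> H" and mH: "Dm / Cm \<le> H"
    and H: "0 \<le> H" "H \<le> V" and S: "A + B \<le> M"
    and fb: "fb > 0" and bb: "bb > 0" and q: "0 \<le> q2" "q2 < q1" "q1 \<le> 1"
    and dl: "\<delta> > 0"
    and a0: "0 < a0" "a0 \<le> q1 * bb / (1 + V)" and W: "M + fb \<le> W"
  shows "(\<delta>*(B + fb*(B/(A+B)) + q2*bb*(Dk/(Ck+Dk)))) /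
         (\<delta>*(A + fb*(A/(A+B)) + q1*bb*(Cm/(Cm+Dm))))
       \<le> (1 - (1 - q2/q1) * (a0 / (W + a0))) * H"
proof -
  define w where "w = A + fb*(A/(A+B))"
  define \<beta> where "\<beta> = Cm/(Cm+Dm)"
  define y where "y = Dk/(Ck+Dk)"
  define a where "a = q1*bb*\<beta>"
  define c where "c = q2/q1"
  have q1: "q1 > 0" using q by linarith
  have wpos: "w > 0" unfolding w_def using A B fb by (simp add: add_pos_nonneg)
  have wle: "w \<le> W"
  proof -
    have "A/(A+B) \<le> 1" using A B by simp
    hence "fb*(A/(A+B)) \<le> fb*1" using fb by (intro mult_left_mono) auto
    thus ?thesis unfolding w_def using S W B by linarith
  qed
  have Bw: "B + fb*(B/(A+B)) = (B/A) * w"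
  proof -
    have "A + B > 0" using A B by linarith
    have "(B/A) * (A + fb*(A/(A+B))) = (B/A)*A + fb*((B/A)*A)/(A+B)"
      by (simp add: distrib_left)
    also have "\<dots> = B + fb*(B/(A+B))" using A by simp
    finally show ?thesis unfolding w_def by simp
  qed
  have \<beta>eq: "\<beta> = 1/(1 + Dm/Cm)" unfolding \<beta>_def using Cm Dm by (simp add: field_simps)
  have \<beta>lo: "\<beta> \<ge> 1/(1+H)"
    unfolding \<beta>eq using mH Cm Dm H by (intro divide_left_mono) (auto simp: add_pos_nonneg)
  have \<beta>lo2: "1/(1+H) \<ge> 1/(1+V)" using H by (intro divide_left_mono) auto
  have yeq: "y = (Dk/Ck)/(1 + Dk/Ck)" unfolding y_def using Ck Dk by (simp add: field_simps)
  have yle: "y \<le> H/(1+H)"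
  proof -
    have "(Dk/Ck)/(1 + Dk/Ck) \<le> H/(1+H)"
      using kH Ck Dk H by (simp add: divide_simps algebra_simps)
    thus ?thesis using yeq by simp
  qed
  have apos: "a \<ge> a0"
  proof -
    have "q1*bb*\<beta> \<ge> q1*bb*(1/(1+V))" using \<beta>lo \<beta>lo2 q1 bb by (intro mult_left_mono) auto
    thus ?thesis unfolding a_def using a0 by simp
  qed
  have num: "(B/A)*w + q2*bb*y \<le> H*(w + c*a)"
  proof -
    have "(B/A)*w \<le> H*w" using rH wpos by (intro mult_right_mono) auto
    moreover have "q2*bb*y \<le> q2*bb*(H/(1+H))" using yle q bb by (intro mult_left_mono) auto
    moreover have "q2*bb*(H/(1+H)) \<le> H*(c*a)"
    proof -
      have "c*a = q2*bb*\<beta>" unfolding c_def a_def using q1 by simp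
      moreover have "H*(1/(1+H)) \<le> H*\<beta>" using \<beta>lo H by (intro mult_left_mono) auto
      hence "H/(1+H) \<le> H*\<beta>" by simp
      hence "q2*bb*(H/(1+H)) \<le> q2*bb*(H*\<beta>)" using q bb by (intro mult_left_mono) auto
      ultimately show ?thesis by (simp add: algebra_simps)
    qed
    ultimately show ?thesis by (simp add: algebra_simps)
  qed
  have ratio: "(w + c*a)/(w+a) = 1 - (1-c)*(a/(w+a))"
    using wpos apos a0 by (simp add: field_simps)
  have mono: "a/(w+a) \<ge> a0/(W+a0)"
  proof -
    have "a0*w \<le> a*W" using wpos apos a0 wle by (intro mult_mono) auto
    hence "a0*(w+a) \<le> a*(W+a0)" by (simp add: algebra_simps)
    moreover have "W + a0 > 0" "w + a > 0" using wpos apos a0 wle by auto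
    ultimately show ?thesis by (simp add: divide_simps)
  qed
  have c1: "1 - c \<ge> 0" unfolding c_def using q q1 by simp
  have "(\<delta>*(B + fb*(B/(A+B)) + q2*bb*(Dk/(Ck+Dk)))) /
         (\<delta>*(A + fb*(A/(A+B)) + q1*bb*(Cm/(Cm+Dm)))) = ((B/A)*w + q2*bb*y)/(w + a)"
    using dl Bw unfolding w_def y_def a_def \<beta>_def by simp
  also have "\<dots> \<le> H*(w + c*a)/(w+a)"
    using num wpos apos a0 by (intro divide_right_mono) auto
  also have "\<dots> = H*((w + c*a)/(w+a))" by simp
  also have "\<dots> = H*(1 - (1-c)*(a/(w+a)))" using ratio by simp
  also have "\<dots> \<le> H*(1 - (1-c)*(a0/(W+a0)))"
  proof -
    have "(1-c)*(a0/(W+a0)) \<le> (1-c)*(a/(w+a))" using mono c1 by (rule mult_left_mono)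
    thus ?thesis using H by (intro mult_left_mono) auto
  qed
  finally show ?thesis unfolding c_def by (simp add: mult.commute)
qed

lemma eventually_bounded:
  fixes X :: "nat \<Rightarrow> real" and \<delta> K :: real
  assumes "0 < \<delta>" "\<delta> < 1" "K \<ge> 0" and rec: "\<forall>n\<ge>L. X (Suc n) \<le> \<delta>*(X n + K)"
  shows "\<exists>M. \<forall>n. X n \<le> M"
proof -
  define M where "M = max (Max (X ` {..L})) (\<delta>*K/(1-\<delta>))"
  have "X n \<le> M" for n
  proof (induction n)
    case 0
    have "X 0 \<le> Max (X ` {..L})" by (intro Max_ge) auto
    thus ?case unfolding M_def by (simp add: le_max_iff_disj)
  next
    case (Suc n)
    show ?case
    proof (cases "Suc n \<le> L")
      case True
      hence "X (Suc n) \<le> Max (X ` {..L})" by (intro Max_ge) auto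
      thus ?thesis unfolding M_def by (simp add: le_max_iff_disj)
    next
      case False
      hence "X (Suc n) \<le> \<delta>*(X n + K)" using rec by auto
      also have "\<dots> \<le> \<delta>*(M + K)" using Suc assms by (intro mult_left_mono) auto
      also have "\<dots> \<le> M"
      proof -
        have "\<delta>*K/(1-\<delta>) \<le> M" unfolding M_def by (simp add: le_max_iff_disj)
        hence "\<delta>*K \<le> (1-\<delta>)*M" using assms by (simp add: divide_simps mult.commute)
        thus ?thesis by (simp add: algebra_simps)
      qed
      finally show ?thesis .
    qed
  qed
  thus ?thesis by blast
qed

lemma decay:
  fixes A B C D :: "nat \<Rightarrow> real" and L dm dk :: nat and \<delta> fb bb q1 q2 :: real
  assumes dmL: "dm \<le> L" and dkL: "dk \<le> L" and dl: "0 < \<delta>" "\<delta> < 1"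
    and fb: "fb > 0" and bb: "bb > 0" and q: "0 \<le> q2" "q2 < q1" "q1 \<le> 1"
    and pos: "\<forall>n. A n > 0 \<and> C n > 0 \<and> B n \<ge> 0 \<and> D n \<ge> 0"
    and recA: "\<forall>n\<ge>L. A (Suc n) = \<delta>*(A n + fb*(A n/(A n+B n)) + q1*bb*(C (n-dm)/(C (n-dm)+D (n-dm))))"
    and recB: "\<forall>n\<ge>L. B (Suc n) = \<delta>*(B n + fb*(B n/(A n+B n)) + q2*bb*(D (n-dk)/(C (n-dk)+D (n-dk))))"
    and recC: "\<forall>n\<ge>L. C (Suc n) = \<delta>*(C n + bb*(C n/(C n+D n)) + q1*fb*(A (n-dm)/(A (n-dm)+B (n-dm))))"
    and recD: "\<forall>n\<ge>L. D (Suc n) = \<delta>*(D n + bb*(D n/(C n+D n)) + q2*fb*(B (n-dk)/(A (n-dk)+B (n-dk))))"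
  shows "\<exists>V \<theta>. 0 < \<theta> \<and> \<theta> < 1 \<and> 0 \<le> V \<and>
           (\<forall>n. B n / A n \<le> V * \<theta> ^ (n div Suc L) \<and> D n / C n \<le> V * \<theta> ^ (n div Suc L))"
proof -
  have q1: "q1 > 0" using q by linarith
  have frac_le: "x/(x+y) \<le> 1" if "x \<ge> 0" "y \<ge> 0" for x y :: real
    using that by (cases "x + y = 0") (auto simp: divide_simps)
  have frac_ge: "x/(x+y) \<ge> 0" if "x \<ge> 0" "y \<ge> 0" for x y :: real
    using that by simp
  define K where "K = 2*(fb+bb)"
  have K: "K \<ge> 0" unfolding K_def using fb bb by simp
  have Srec: "\<forall>n\<ge>L. A (Suc n) + B (Suc n) \<le> \<delta>*((A n + B n) + K)"
  proof (intro allI impI)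
    fix n assume n: "n \<ge> L"
    have ab: "A n > 0" "B n \<ge> 0" using pos by auto
    have "A n + B n > 0" using ab by linarith
    hence "fb*(A n/(A n+B n)) + fb*(B n/(A n+B n)) = fb"
      by (simp add: distrib_left[symmetric] add_divide_distrib[symmetric])
    moreover have "q1*bb*(C (n-dm)/(C (n-dm)+D (n-dm))) \<le> 1*bb*1"
      using q1 q bb pos frac_le frac_ge by (intro mult_mono) (auto simp: less_imp_le)
    moreover have "q2*bb*(D (n-dk)/(C (n-dk)+D (n-dk))) \<le> 1*bb*1"
      using q1 q bb pos frac_le[of "D (n-dk)" "C (n-dk)"] frac_ge by (intro mult_mono) (auto simp: less_imp_le add.commute)
    ultimately have "A n + fb*(A n/(A n+B n)) + q1*bb*(C (n-dm)/(C (n-dm)+D (n-dm)))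
        + (B n + fb*(B n/(A n+B n)) + q2*bb*(D (n-dk)/(C (n-dk)+D (n-dk)))) \<le> (A n + B n) + K"
      unfolding K_def using fb bb by (smt (verit))
    hence "\<delta>*(A n + fb*(A n/(A n+B n)) + q1*bb*(C (n-dm)/(C (n-dm)+D (n-dm))))
        + \<delta>*(B n + fb*(B n/(A n+B n)) + q2*bb*(D (n-dk)/(C (n-dk)+D (n-dk)))) \<le> \<delta>*((A n + B n) + K)"
      using dl by (simp add: distrib_left[symmetric] mult_left_mono)
    thus "A (Suc n) + B (Suc n) \<le> \<delta>*((A n + B n) + K)" using recA recB n by simp
  qed
  have Trec: "\<forall>n\<ge>L. C (Suc n) + D (Suc n) \<le> \<delta>*((C n + D n) + K)"
  proof (intro allI impI)
    fix n assume n: "n \<ge> L"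
    have ab: "C n > 0" "D n \<ge> 0" using pos by auto
    have "C n + D n > 0" using ab by linarith
    hence "bb*(C n/(C n+D n)) + bb*(D n/(C n+D n)) = bb"
      by (simp add: distrib_left[symmetric] add_divide_distrib[symmetric])
    moreover have "q1*fb*(A (n-dm)/(A (n-dm)+B (n-dm))) \<le> 1*fb*1"
      using q1 q fb pos frac_le frac_ge by (intro mult_mono) (auto simp: less_imp_le)
    moreover have "q2*fb*(B (n-dk)/(A (n-dk)+B (n-dk))) \<le> 1*fb*1"
      using q1 q fb pos frac_le[of "B (n-dk)" "A (n-dk)"] frac_ge by (intro mult_mono) (auto simp: less_imp_le add.commute)
    ultimately have "C n + bb*(C n/(C n+D n)) + q1*fb*(A (n-dm)/(A (n-dm)+B (n-dm)))
        + (D n + bb*(D n/(C n+D n)) + q2*fb*(B (n-dk)/(A (n-dk)+B (n-dk)))) \<le> (C n + D n) + K"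
      unfolding K_def using fb bb by (smt (verit))
    hence "\<delta>*(C n + bb*(C n/(C n+D n)) + q1*fb*(A (n-dm)/(A (n-dm)+B (n-dm))))
        + \<delta>*(D n + bb*(D n/(C n+D n)) + q2*fb*(B (n-dk)/(A (n-dk)+B (n-dk)))) \<le> \<delta>*((C n + D n) + K)"
      using dl by (simp add: distrib_left[symmetric] mult_left_mono)
    thus "C (Suc n) + D (Suc n) \<le> \<delta>*((C n + D n) + K)" using recC recD n by simp
  qed
  obtain M1 where M1: "\<forall>n. A n + B n \<le> M1"
    using eventually_bounded[of \<delta> K L "\<lambda>n. A n + B n"] dl K Srec by auto
  obtain M2 where M2: "\<forall>n. C n + D n \<le> M2"
    using eventually_bounded[of \<delta> K L "\<lambda>n. C n + D n"] dl K Trec by auto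
  define M where "M = max M1 M2"
  have MS: "A n + B n \<le> M" "C n + D n \<le> M" for n using M1 M2 unfolding M_def by (auto simp: le_max_iff_disj)
  have Mpos: "M > 0" using MS(1)[of 0] pos by (smt (verit))
  define R where "R = (\<lambda>n. max (B n / A n) (D n / C n))"
  define V where "V = Max (R ` {..L})"
  have RV: "R n \<le> V" if "n \<le> L" for n unfolding V_def using that by (intro Max_ge) auto
  have V0: "V \<ge> 0"
  proof -
    have "B 0 / A 0 \<ge> 0" using pos[rule_format, of 0] by simp
    hence "R 0 \<ge> 0" unfolding R_def by (auto simp: le_max_iff_disj)
    thus ?thesis using RV[of 0] by simp
  qed
  define a0 where "a0 = q1 * min fb bb / (1 + V)"
  define W where "W = M + max fb bb"
  define \<theta> where "\<theta> = 1 - (1 - q2/q1) * (a0 / (W + a0))"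
  have a0: "a0 > 0" unfolding a0_def using q1 fb bb V0 by simp
  have Wpos: "W > 0" unfolding W_def using Mpos fb bb by (smt (verit))
  have a0f: "a0 \<le> q1 * fb / (1 + V)" "a0 \<le> q1 * bb / (1 + V)"
    unfolding a0_def using q1 V0 by (auto intro!: divide_right_mono mult_left_mono)
  have Wf: "M + fb \<le> W" "M + bb \<le> W" unfolding W_def by auto
  have c01: "0 < 1 - q2/q1" "1 - q2/q1 \<le> 1" using q q1 by (auto simp: divide_simps)
  have f01: "0 < a0/(W+a0)" "a0/(W+a0) < 1" using a0 Wpos by (auto simp: divide_simps)
  have th: "0 < \<theta>" "\<theta> < 1"
  proof -
    have "(1 - q2/q1) * (a0 / (W + a0)) \<le> 1 * (a0 / (W + a0))"
      using c01 f01 by (intro mult_right_mono) auto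
    moreover have "0 < (1 - q2/q1) * (a0 / (W + a0))" using c01 f01 by (intro mult_pos_pos)
    ultimately show "0 < \<theta>" "\<theta> < 1" unfolding \<theta>_def using f01 by auto
  qed
  define h where "h = (\<lambda>n::nat. V * \<theta> ^ (n div Suc L))"
  have h_anti: "h j \<le> h i" if "i \<le> j" for i j
  proof -
    have "i div Suc L \<le> j div Suc L" using that by (rule div_le_mono)
    hence "\<theta> ^ (j div Suc L) \<le> \<theta> ^ (i div Suc L)" using th by (intro power_decreasing) auto
    thus ?thesis unfolding h_def using V0 by (intro mult_left_mono) auto
  qed
  have hV: "h n \<le> V" for n using h_anti[of 0 n] by (simp add: h_def)
  have h0: "0 \<le> h n" for n unfolding h_def using V0 th by simp
  have main: "\<forall>j\<le>n. B j / A j \<le> h j \<and> D j / C j \<le> h j" for n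
  proof (induction n)
    case 0
    have "R 0 \<le> V" by (rule RV) simp
    thus ?case unfolding R_def h_def by simp
  next
    case (Suc n)
    show ?case
    proof (cases "Suc n \<le> L")
      case True
      { fix j assume j: "j \<le> Suc n"
        hence "R j \<le> V" using True by (intro RV) simp
        moreover have "j div Suc L = 0" using j True by simp
        ultimately have "B j / A j \<le> h j \<and> D j / C j \<le> h j" unfolding R_def h_def by simp }
      thus ?thesis by blast
    next
      case False
      hence nL: "n \<ge> L" by simp
      define H where "H = h (n - L)"
      have win: "B i / A i \<le> H \<and> D i / C i \<le> H" if "n - L \<le> i" "i \<le> n" for i
        using Suc.IH that h_anti[of "n-L" i] unfolding H_def by fastforce
      have H: "0 \<le> H" "H \<le> V" unfolding H_def using h0 hV by auto
      have wk: "B n / A n \<le> H" "D n / C n \<le> H"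
                "D (n-dk) / C (n-dk) \<le> H" "D (n-dm) / C (n-dm) \<le> H"
                "B (n-dk) / A (n-dk) \<le> H" "B (n-dm) / A (n-dm) \<le> H"
        using win dmL dkL nL by auto
      have e: "Suc n div Suc L = Suc ((n - L) div Suc L)"
      proof -
        have "Suc n = (n - L) + Suc L" using nL by simp
        thus ?thesis by (metis div_add_self2 nat.simps(3) plus_1_eq_Suc add.commute)
      qed
      have hS: "h (Suc n) = \<theta> * H" unfolding h_def H_def e by simp
      have r1: "B (Suc n) / A (Suc n) \<le> \<theta> * H"
      proof -
        have "B (Suc n) / A (Suc n) =
          (\<delta>*(B n + fb*(B n/(A n+B n)) + q2*bb*(D (n-dk)/(C (n-dk)+D (n-dk))))) /
         (\<delta>*(A n + fb*(A n/(A n+B n)) + q1*bb*(C (n-dm)/(C (n-dm)+D (n-dm)))))"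
          using recA recB nL by simp
        also have "\<dots> \<le> (1 - (1 - q2/q1) * (a0 / (W + a0))) * H"
          by (rule step_ratio) (use pos wk H MS q dl fb bb a0 a0f Wf in auto)
        finally show ?thesis unfolding \<theta>_def .
      qed
      have r2: "D (Suc n) / C (Suc n) \<le> \<theta> * H"
      proof -
        have "D (Suc n) / C (Suc n) =
          (\<delta>*(D n + bb*(D n/(C n+D n)) + q2*fb*(B (n-dk)/(A (n-dk)+B (n-dk))))) /
         (\<delta>*(C n + bb*(C n/(C n+D n)) + q1*fb*(A (n-dm)/(A (n-dm)+B (n-dm)))))"
          using recC recD nL by simp
        also have "\<dots> \<le> (1 - (1 - q2/q1) * (a0 / (W + a0))) * H"
          by (rule step_ratio) (use pos wk H MS q dl fb bb a0 a0f Wf in auto)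
        finally show ?thesis unfolding \<theta>_def .
      qed
      show ?thesis using Suc.IH r1 r2 hS by (metis le_Suc_eq)
    qed
  qed
  show ?thesis
    using main th V0 unfolding h_def by blast
qed




lemma path_edges_iff:
  "(x,y) \<in> path_edges P \<longleftrightarrow> (\<exists>i. Suc i < length P \<and> x = P!i \<and> y = P!Suc i)"
  unfolding path_edges_def in_set_zip
proof
  assume "\<exists>n. P ! n = fst (x, y) \<and> tl P ! n = snd (x, y) \<and> n < length P \<and> n < length (tl P)"
  then obtain i where "P!i = x" "tl P ! i = y" "i < length (tl P)" by auto
  hence "Suc i < length P \<and> x = P!i \<and> y = P!Suc i" by (auto simp: nth_tl)
  thus "\<exists>i. Suc i < length P \<and> x = P!i \<and> y = P!Suc i" by blast
next
  assume "\<exists>i. Suc i < length P \<and> x = P!i \<and> y = P!Suc i"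
  then obtain i where "Suc i < length P" "x = P!i" "y = P!Suc i" by auto
  thus "\<exists>n. P ! n = fst (x, y) \<and> tl P ! n = snd (x, y) \<and> n < length P \<and> n < length (tl P)"
    by (intro exI[of _ i]) (auto simp: nth_tl)
qed

lemma tpp_sym: "two_parallel_paths E s d P Q \<Longrightarrow> two_parallel_paths E s d Q P"
  unfolding two_parallel_paths_def by auto

locale tpp =
  fixes E :: "('v \<times> 'v) set" and s d :: 'v and P Q :: "'v list"
  assumes G: "two_parallel_paths E s d P Q"
begin

definition n where "n = length P - 1"
definition k where "k = length Q - 1"

lemma basic:
  shows "s \<noteq> d" "length P \<ge> 2" "distinct P" "hd P = s" "last P = d"
    "length Q \<ge> 2" "distinct Q" "hd Q = s" "last Q = d"
    "set P \<inter> set Q = {s, d}" "E = path_edges P \<union> path_edges Q" "P \<noteq> Q"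
  using G unfolding two_parallel_paths_def is_path_def by auto

lemma n1: "n \<ge> 1" and lenP: "length P = Suc n" using basic unfolding n_def by auto
lemma k1: "k \<ge> 1" and lenQ: "length Q = Suc k" using basic unfolding k_def by auto

lemma P0: "P!0 = s"
proof -
  have "P \<noteq> []" using basic by auto
  hence "hd P = P!0" by (rule hd_conv_nth)
  thus ?thesis using basic(4) by simp
qed
lemma Pn: "P!n = d"
proof -
  have "P \<noteq> []" using basic by auto
  hence "last P = P!(length P - 1)" by (rule last_conv_nth)
  thus ?thesis using basic(5) unfolding n_def by simp
qed
lemma Q0: "Q!0 = s"
proof -
  have "Q \<noteq> []" using basic by auto
  hence "hd Q = Q!0" by (rule hd_conv_nth)
  thus ?thesis using basic(8) by simp
qed
lemma Qk: "Q!k = d"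
proof -
  have "Q \<noteq> []" using basic by auto
  hence "last Q = Q!(length Q - 1)" by (rule last_conv_nth)
  thus ?thesis using basic(9) unfolding k_def by simp
qed

lemma P_inj: "i \<le> n \<Longrightarrow> j \<le> n \<Longrightarrow> P!i = P!j \<longleftrightarrow> i = j"
  using basic(3) lenP by (simp add: nth_eq_iff_index_eq)
lemma Q_inj: "i \<le> k \<Longrightarrow> j \<le> k \<Longrightarrow> Q!i = Q!j \<longleftrightarrow> i = j"
  using basic(7) lenQ by (simp add: nth_eq_iff_index_eq)

lemma P_not_s: "0 < i \<Longrightarrow> i \<le> n \<Longrightarrow> P!i \<noteq> s"
  using P_inj[of i 0] P0 by auto
lemma P_not_d: "i < n \<Longrightarrow> P!i \<noteq> d"
  using P_inj[of i n] Pn by auto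
lemma Q_not_s: "0 < i \<Longrightarrow> i \<le> k \<Longrightarrow> Q!i \<noteq> s"
  using Q_inj[of i 0] Q0 by auto
lemma Q_not_d: "i < k \<Longrightarrow> Q!i \<noteq> d"
  using Q_inj[of i k] Qk by auto

lemma P_edge: "i < n \<Longrightarrow> (P!i, P!Suc i) \<in> E"
  using basic(11) lenP by (auto simp: path_edges_iff)

lemma P_internal_notQ: "0 < i \<Longrightarrow> i < n \<Longrightarrow> P!i \<notin> set Q"
proof
  assume "0 < i" "i < n" "P!i \<in> set Q"
  moreover have "P!i \<in> set P" using \<open>i < n\<close> lenP by auto
  ultimately have "P!i \<in> {s,d}" using basic(10) by blast
  thus False using P_not_s P_not_d \<open>0 < i\<close> \<open>i < n\<close> by auto
qed

lemma E_cases: "(x,y) \<in> E \<longleftrightarrow> (\<exists>i<n. x = P!i \<and> y = P!Suc i) \<or> (\<exists>i<k. x = Q!i \<and> y = Q!Suc i)"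
  using basic(11) lenP lenQ by (auto simp: path_edges_iff)

lemma out_internal: "0 < i \<Longrightarrow> i < n \<Longrightarrow> out_nbrs E (P!i) = {P!Suc i}"
proof -
  assume i: "0 < i" "i < n"
  have nq: "P!i \<notin> set Q" using P_internal_notQ i .
  { fix z assume "(P!i, z) \<in> E"
    then consider (a) j where "j < n" "P!i = P!j" "z = P!Suc j" | (b) j where "j < k" "P!i = Q!j" "z = Q!Suc j"
      unfolding E_cases by blast
    hence "z = P!Suc i"
    proof cases
      case a
      have "i \<le> n" "j \<le> n" using a i by auto
      hence "i = j" using iffD1[OF P_inj a(2)] by blast
      thus ?thesis using a(3) by simp
    next
      case b
      have "j < length Q" using b lenQ by simp
      hence "Q!j \<in> set Q" by (rule nth_mem)
      hence "P!i \<in> set Q" by (simp only: b(2))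
      thus ?thesis by (rule notE[OF nq])
    qed }
  moreover have "(P!i, P!Suc i) \<in> E" using P_edge i by simp
  ultimately show ?thesis unfolding out_nbrs_def by blast
qed

lemma in_internal: "0 < i \<Longrightarrow> i < n \<Longrightarrow> in_nbrs E (P!i) = {P!(i - 1)}"
proof -
  assume i: "0 < i" "i < n"
  have nq: "P!i \<notin> set Q" using P_internal_notQ i .
  { fix z assume "(z, P!i) \<in> E"
    then consider (a) j where "j < n" "z = P!j" "P!i = P!Suc j" | (b) j where "j < k" "z = Q!j" "P!i = Q!Suc j"
      unfolding E_cases by blast
    hence "z = P!(i-1)"
    proof cases
      case a
      have "i \<le> n" "Suc j \<le> n" using a i by auto
      hence "i = Suc j" using iffD1[OF P_inj a(3)] by blast
      thus ?thesis using a(2) by simp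
    next
      case b
      have "Suc j < length Q" using b lenQ by simp
      hence "Q!Suc j \<in> set Q" by (rule nth_mem)
      hence "P!i \<in> set Q" by (simp only: b(3))
      thus ?thesis by (rule notE[OF nq])
    qed }
  moreover have "(P!(i-1), P!i) \<in> E" using P_edge[of "i-1"] i by simp
  ultimately show ?thesis unfolding in_nbrs_def by blast
qed

lemma first_distinct: "P!1 \<noteq> Q!1"
proof
  assume eq: "P!1 = Q!1"
  have "P!1 \<in> set P" "Q!1 \<in> set Q" using lenP lenQ n1 k1 by auto
  hence "P!1 \<in> {s,d}" using eq basic(10) by auto
  hence "P!1 = d" using P_not_s[of 1] n1 by auto
  hence n: "n = 1" using P_inj[of 1 n] Pn n1 by auto
  have "Q!1 = d" using eq \<open>P!1 = d\<close> by simp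
  hence k: "k = 1" using Q_inj[of 1 k] Qk k1 by auto
  have "P = [s,d]" using lenP n P0 \<open>P!1 = d\<close>
    by (intro nth_equalityI) (auto simp: less_Suc_eq nth_Cons')
  moreover have "Q = [s,d]" using lenQ k Q0 \<open>Q!1 = d\<close>
    by (intro nth_equalityI) (auto simp: less_Suc_eq nth_Cons')
  ultimately show False using basic(12) by simp
qed

lemma last_distinct: "P!(n-1) \<noteq> Q!(k-1)"
proof
  assume eq: "P!(n-1) = Q!(k-1)"
  have "P!(n-1) \<in> set P" "Q!(k-1) \<in> set Q" using lenP lenQ n1 k1 by auto
  hence "P!(n-1) \<in> {s,d}" using eq basic(10) by auto
  hence "P!(n-1) = s" using P_not_d[of "n-1"] n1 by auto
  hence n: "n = 1" using P_inj[of "n-1" 0] P0 n1 by auto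
  have "Q!(k-1) = s" using eq \<open>P!(n-1) = s\<close> by simp
  hence k: "k = 1" using Q_inj[of "k-1" 0] Q0 k1 by auto
  have "P = [s,d]" using lenP n P0 Pn
    by (intro nth_equalityI) (auto simp: less_Suc_eq nth_Cons')
  moreover have "Q = [s,d]" using lenQ k Q0 Qk
    by (intro nth_equalityI) (auto simp: less_Suc_eq nth_Cons')
  ultimately show False using basic(12) by simp
qed

lemma out_s: "out_nbrs E s = {P!1, Q!1}"
proof -
  { fix z assume "(s, z) \<in> E"
    then consider (a) j where "j < n" "s = P!j" "z = P!Suc j" | (b) j where "j < k" "s = Q!j" "z = Q!Suc j"
      unfolding E_cases by blast
    hence "z = P!1 \<or> z = Q!1"
    proof cases
      case a thus ?thesis using P_inj[of j 0] P0 by auto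
    next
      case b thus ?thesis using Q_inj[of j 0] Q0 by auto
    qed }
  moreover have "(s, P!1) \<in> E" using P_edge[of 0] n1 P0 by simp
  moreover have "(s, Q!1) \<in> E" unfolding E_cases using Q0 k1
    by (intro disjI2 exI[of _ 0]) auto
  ultimately show ?thesis unfolding out_nbrs_def by blast
qed

lemma in_d: "in_nbrs E d = {P!(n-1), Q!(k-1)}"
proof -
  { fix z assume "(z, d) \<in> E"
    then consider (a) j where "j < n" "z = P!j" "d = P!Suc j" | (b) j where "j < k" "z = Q!j" "d = Q!Suc j"
      unfolding E_cases by blast
    hence "z = P!(n-1) \<or> z = Q!(k-1)"
    proof cases
      case a
      hence "Suc j = n" using P_inj[of "Suc j" n] Pn by auto
      hence "j = n - 1" by simp
      thus ?thesis using a by simp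
    next
      case b
      hence "Suc j = k" using Q_inj[of "Suc j" k] Qk by auto
      hence "j = k - 1" by simp
      thus ?thesis using b by simp
    qed }
  moreover have "(P!(n-1), d) \<in> E" using P_edge[of "n-1"] n1 Pn by simp
  moreover have "(Q!(k-1), d) \<in> E" unfolding E_cases using Qk k1
    by (intro disjI2 exI[of _ "k-1"]) auto
  ultimately show ?thesis unfolding in_nbrs_def by blast
qed

lemma card_out_s: "card (out_nbrs E s) = 2" using out_s first_distinct by simp
lemma card_in_d: "card (in_nbrs E d) = 2" using in_d last_distinct by simp

lemma E_not: "(x,y) \<in> E \<Longrightarrow> x \<noteq> d \<and> y \<noteq> s"
  unfolding E_cases
proof (elim disjE exE conjE)
  fix i assume "i < n" "x = P!i" "y = P!Suc i"
  thus ?thesis using P_not_d[of i] P_not_s[of "Suc i"] by simp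
next
  fix i assume "i < k" "x = Q!i" "y = Q!Suc i"
  thus ?thesis using Q_not_d[of i] Q_not_s[of "Suc i"] by simp
qed

end

lemma tpp_swap: "tpp E s d P Q \<Longrightarrow> tpp E s d Q P"
  unfolding tpp_def by (rule tpp_sym)




locale antdyn = tpp E s d P Q for E :: "('v \<times> 'v) set" and s d P Q +
  fixes l :: "'v \<Rightarrow> real" and \<delta> fbar bbar :: real
    and p :: "nat \<Rightarrow> 'v \<times> 'v \<Rightarrow> real" and f b :: "nat \<Rightarrow> 'v \<Rightarrow> real"
  assumes leak: "\<forall>v \<in> set P \<union> set Q. 0 \<le> l v \<and> l v \<le> 1"
    and dl: "0 < \<delta>" "\<delta> < 1" and inp: "fbar > 0" "bbar > 0"
    and dyn: "ant_dynamics E s d l \<delta> (\<lambda>_. fbar) (\<lambda>_. bbar) p f b"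
begin

lemma p0: "e \<in> E \<Longrightarrow> p 0 e \<ge> 0" using dyn unfolding ant_dynamics_def by auto
lemma f0: "f 0 v \<ge> 0" using dyn unfolding ant_dynamics_def by auto
lemma b0: "b 0 v \<ge> 0" using dyn unfolding ant_dynamics_def by auto
lemma fs: "f t s = fbar" using dyn unfolding ant_dynamics_def by auto
lemma bd: "b t d = bbar" using dyn unfolding ant_dynamics_def by auto
lemma frec: "v \<noteq> s \<Longrightarrow> f (Suc t) v = (1 - l v) * (\<Sum>z\<in>in_nbrs E v. fwd_edge_flow E (p t) (f t) z v)"
  using dyn unfolding ant_dynamics_def by auto
lemma brec: "u \<noteq> d \<Longrightarrow> b (Suc t) u = (1 - l u) * (\<Sum>z\<in>out_nbrs E u. bwd_edge_flow E (p t) (b t) u z)"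
  using dyn unfolding ant_dynamics_def by auto
lemma prec: "(u,v) \<in> E \<Longrightarrow> p (Suc t) (u, v) = \<delta> * (p t (u, v) + fwd_edge_flow E (p t) (f t) u v
                                           + bwd_edge_flow E (p t) (b t) u v)"
  using dyn unfolding ant_dynamics_def by auto

lemma E_in_set: "(x,y) \<in> E \<Longrightarrow> x \<in> set P \<union> set Q \<and> y \<in> set P \<union> set Q"
  unfolding E_cases using lenP lenQ by (auto)

lemma nonneg: "(\<forall>e\<in>E. p t e \<ge> 0) \<and> (\<forall>v. v \<noteq> d \<longrightarrow> v \<in> set P \<union> set Q \<longrightarrow> f t v \<ge> 0)
   \<and> (\<forall>v. v \<noteq> s \<longrightarrow> v \<in> set P \<union> set Q \<longrightarrow> b t v \<ge> 0)"
proof (induction t)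
  case 0 thus ?case using p0 f0 b0 by auto
next
  case (Suc t)
  have nuf: "nu_f E (p t) u v \<ge> 0" if "(u,v) \<in> E" for u v
  proof -
    have "(\<Sum>z\<in>out_nbrs E u. p t (u, z)) \<ge> 0"
      using Suc.IH by (intro sum_nonneg) (auto simp: out_nbrs_def)
    thus ?thesis unfolding nu_f_def using Suc.IH that by auto
  qed
  have nub: "nu_b E (p t) u v \<ge> 0" if "(u,v) \<in> E" for u v
  proof -
    have "(\<Sum>z\<in>in_nbrs E v. p t (z, v)) \<ge> 0"
      using Suc.IH by (intro sum_nonneg) (auto simp: in_nbrs_def)
    thus ?thesis unfolding nu_b_def using Suc.IH that by auto
  qed
  have fw: "fwd_edge_flow E (p t) (f t) u v \<ge> 0" if "(u,v) \<in> E" for u v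
  proof -
    have "f t u \<ge> 0" using Suc.IH E_not[OF that] E_in_set[OF that] by auto
    thus ?thesis unfolding fwd_edge_flow_def using nuf[OF that] by auto
  qed
  have bw: "bwd_edge_flow E (p t) (b t) u v \<ge> 0" if "(u,v) \<in> E" for u v
  proof -
    have "b t v \<ge> 0" using Suc.IH E_not[OF that] E_in_set[OF that] by auto
    thus ?thesis unfolding bwd_edge_flow_def using nub[OF that] by auto
  qed
  have 1: "\<forall>e\<in>E. p (Suc t) e \<ge> 0"
  proof
    fix e assume e: "e \<in> E"
    obtain u v where uv: "e = (u,v)" by (cases e)
    show "p (Suc t) e \<ge> 0" unfolding uv using prec[of u v t] e uv Suc.IH fw bw dl
      by (auto intro!: mult_nonneg_nonneg add_nonneg_nonneg)
  qed
  have 2: "f (Suc t) v \<ge> 0" if "v \<noteq> d" "v \<in> set P \<union> set Q" for v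
  proof (cases "v = s")
    case True thus ?thesis using fs inp by simp
  next
    case False
    have "(\<Sum>z\<in>in_nbrs E v. fwd_edge_flow E (p t) (f t) z v) \<ge> 0"
      using fw by (intro sum_nonneg) (auto simp: in_nbrs_def)
    moreover have "1 - l v \<ge> 0" using leak that by auto
    ultimately show ?thesis using frec[OF False] by simp
  qed
  have 3: "b (Suc t) v \<ge> 0" if "v \<noteq> s" "v \<in> set P \<union> set Q" for v
  proof (cases "v = d")
    case True thus ?thesis using bd inp by simp
  next
    case False
    have "(\<Sum>z\<in>out_nbrs E v. bwd_edge_flow E (p t) (b t) v z) \<ge> 0"
      using bw by (intro sum_nonneg) (auto simp: out_nbrs_def)
    moreover have "1 - l v \<ge> 0" using leak that by auto
    ultimately show ?thesis using brec[OF False] by simp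
  qed
  show ?case using 1 2 3 by blast
qed

lemma flows_nonneg: "(u,v) \<in> E \<Longrightarrow> fwd_edge_flow E (p t) (f t) u v \<ge> 0 \<and> bwd_edge_flow E (p t) (b t) u v \<ge> 0"
proof -
  assume uv: "(u,v) \<in> E"
  have IH: "(\<forall>e\<in>E. p t e \<ge> 0) \<and> (\<forall>v. v \<noteq> d \<longrightarrow> v \<in> set P \<union> set Q \<longrightarrow> f t v \<ge> 0)
   \<and> (\<forall>v. v \<noteq> s \<longrightarrow> v \<in> set P \<union> set Q \<longrightarrow> b t v \<ge> 0)" by (rule nonneg)
  have "(\<Sum>z\<in>out_nbrs E u. p t (u, z)) \<ge> 0"
    using IH by (intro sum_nonneg) (auto simp: out_nbrs_def)
  hence nuf: "nu_f E (p t) u v \<ge> 0" unfolding nu_f_def using IH uv by auto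
  have "(\<Sum>z\<in>in_nbrs E v. p t (z, v)) \<ge> 0"
    using IH by (intro sum_nonneg) (auto simp: in_nbrs_def)
  hence nub: "nu_b E (p t) u v \<ge> 0" unfolding nu_b_def using IH uv by auto
  have "f t u \<ge> 0" "b t v \<ge> 0" using IH E_not[OF uv] E_in_set[OF uv] by auto
  thus ?thesis unfolding fwd_edge_flow_def bwd_edge_flow_def using nuf nub by auto
qed

lemma p_nonneg: "e \<in> E \<Longrightarrow> p t e \<ge> 0" using nonneg by blast

lemma p_grow: "e \<in> E \<Longrightarrow> p (Suc t) e \<ge> \<delta> * p t e"
proof -
  assume e: "e \<in> E"
  obtain u v where uv: "e = (u,v)" by (cases e)
  show ?thesis unfolding uv using prec[of u v t] e uv flows_nonneg[of u v t] dl
    by (auto intro!: mult_left_mono)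
qed

definition \<alpha> where "\<alpha> t = nu_f E (p t) s (P!1)"
definition \<beta> where "\<beta> t = nu_b E (p t) (P!(n-1)) d"
definition q where "q = (\<Prod>v\<in>set P - {s, d}. (1 - l v))"

lemma fchain: "i < n \<Longrightarrow> fwd_edge_flow E (p (t+i)) (f (t+i)) (P!i) (P!Suc i)
   = (\<Prod>j\<in>{1..i}. 1 - l (P!j)) * (fbar * \<alpha> t)"
proof (induction i)
  case 0
  show ?case unfolding fwd_edge_flow_def \<alpha>_def using card_out_s P0 fs by simp
next
  case (Suc i)
  let ?u = "P!Suc i"
  have i: "0 < Suc i" "Suc i < n" using Suc.prems by auto
  have "fwd_edge_flow E (p (t + Suc i)) (f (t + Suc i)) ?u (P!Suc (Suc i)) = f (Suc (t+i)) ?u"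
    unfolding fwd_edge_flow_def using out_internal[OF i] by simp
  also have "\<dots> = (1 - l ?u) * fwd_edge_flow E (p (t+i)) (f (t+i)) (P!i) ?u"
    using frec[of ?u "t+i"] P_not_s[of "Suc i"] in_internal[OF i] i by simp
  also have "\<dots> = (1 - l ?u) * ((\<Prod>j\<in>{1..i}. 1 - l (P!j)) * (fbar * \<alpha> t))"
    using Suc by simp
  also have "\<dots> = (\<Prod>j\<in>{1..Suc i}. 1 - l (P!j)) * (fbar * \<alpha> t)" by simp
  finally show ?case .
qed

lemma bchain: "i < n \<Longrightarrow> bwd_edge_flow E (p (t+i)) (b (t+i)) (P!(n - Suc i)) (P!(n-i))
   = (\<Prod>j\<in>{1..i}. 1 - l (P!(n-j))) * (bbar * \<beta> t)"
proof (induction i)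
  case 0
  show ?case unfolding bwd_edge_flow_def \<beta>_def using card_in_d Pn bd by simp
next
  case (Suc i)
  let ?v = "P!(n - Suc i)"
  have i: "0 < n - Suc i" "n - Suc i < n" using Suc.prems by auto
  have e1: "Suc (n - Suc i) = n - i" using Suc.prems by simp
  have "bwd_edge_flow E (p (t + Suc i)) (b (t + Suc i)) (P!(n - Suc (Suc i))) ?v = b (Suc (t+i)) ?v"
  proof -
    have "n - Suc i - 1 = n - Suc (Suc i)" by simp
    thus ?thesis unfolding bwd_edge_flow_def using in_internal[OF i] by simp
  qed
  also have "\<dots> = (1 - l ?v) * bwd_edge_flow E (p (t+i)) (b (t+i)) ?v (P!(n-i))"
    using brec[of ?v "t+i"] P_not_d[of "n - Suc i"] out_internal[OF i] i e1 by simp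
  also have "\<dots> = (1 - l ?v) * ((\<Prod>j\<in>{1..i}. 1 - l (P!(n-j))) * (bbar * \<beta> t))"
    using Suc by simp
  also have "\<dots> = (\<Prod>j\<in>{1..Suc i}. 1 - l (P!(n-j))) * (bbar * \<beta> t)" by simp
  finally show ?case .
qed

lemma q_eq: "q = (\<Prod>j\<in>{1..n-1}. 1 - l (P!j))"
proof -
  have img: "set P - {s, d} = (\<lambda>j. P!j) ` {1..n-1}"
  proof
    show "set P - {s, d} \<subseteq> (\<lambda>j. P!j) ` {1..n-1}"
    proof
      fix v assume v: "v \<in> set P - {s, d}"
      then obtain j where j: "j < length P" "v = P!j" by (auto simp: in_set_conv_nth)
      have "j \<noteq> 0"
      proof
        assume "j = 0" hence "v = s" using j P0 by simp
        thus False using v by simp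
      qed
      moreover have "j \<noteq> n" using v j Pn by auto
      ultimately show "v \<in> (\<lambda>j. P!j) ` {1..n-1}" using j lenP by auto
    qed
  next
    show "(\<lambda>j. P!j) ` {1..n-1} \<subseteq> set P - {s, d}"
    proof
      fix v assume "v \<in> (\<lambda>j. P!j) ` {1..n-1}"
      then obtain j where j: "1 \<le> j" "j \<le> n - 1" "v = P!j" by auto
      have "P!j \<noteq> s" using P_not_s[of j] j by simp
      moreover have "P!j \<noteq> d" using P_not_d[of j] j n1 by simp
      moreover have "P!j \<in> set P" using j lenP by simp
      ultimately show "v \<in> set P - {s, d}" using j by simp
    qed
  qed
  have inj: "inj_on (\<lambda>j. P!j) {1..n-1}" unfolding inj_on_def using P_inj by auto
  show ?thesis unfolding q_def img using prod.reindex[OF inj, of "\<lambda>v. 1 - l v"] by simp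
qed

lemma q_rev: "q = (\<Prod>j\<in>{1..n-1}. 1 - l (P!(n-j)))"
proof -
  have "(\<Prod>j\<in>{1..n-1}. 1 - l (P!j)) = (\<Prod>j\<in>{1..n-1}. 1 - l (P!(n - 1 + 1 - j)))"
    by (rule prod.atLeastAtMost_rev)
  also have "\<dots> = (\<Prod>j\<in>{1..n-1}. 1 - l (P!(n-j)))" using n1 by simp
  finally show ?thesis using q_eq by simp
qed

lemma q_bounds: "0 \<le> q" "q \<le> 1"
  unfolding q_def using leak by (auto intro!: prod_nonneg prod_le_1)

definition X where "X t = p t (s, P!1)"
definition Y where "Y t = p t (P!(n-1), d)"

lemma fwd_first: "fwd_edge_flow E (p t) (f t) s (P!1) = fbar * \<alpha> t"
  using fchain[of 0 t] n1 P0 by simp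
lemma bwd_last: "bwd_edge_flow E (p t) (b t) (P!(n-1)) d = bbar * \<beta> t"
  using bchain[of 0 t] n1 Pn by simp

lemma fwd_last: "t \<ge> n - 1 \<Longrightarrow> fwd_edge_flow E (p t) (f t) (P!(n-1)) d = q * (fbar * \<alpha> (t - (n-1)))"
  using fchain[of "n-1" "t - (n-1)"] n1 Pn q_eq by simp
lemma bwd_first: "t \<ge> n - 1 \<Longrightarrow> bwd_edge_flow E (p t) (b t) s (P!1) = q * (bbar * \<beta> (t - (n-1)))"
proof -
  assume t: "t \<ge> n - 1"
  have "n - Suc (n-1) = 0" "n - (n-1) = 1" using n1 by auto
  thus ?thesis using bchain[of "n-1" "t - (n-1)"] n1 P0 q_rev t by simp
qed

lemma recX: "t \<ge> n - 1 \<Longrightarrow> X (Suc t) = \<delta> * (X t + fbar * \<alpha> t + q * bbar * \<beta> (t - (n-1)))"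
  unfolding X_def using prec[of s "P!1" t] P_edge[of 0] n1 P0 fwd_first bwd_first by simp
lemma recY: "t \<ge> n - 1 \<Longrightarrow> Y (Suc t) = \<delta> * (Y t + q * fbar * \<alpha> (t - (n-1)) + bbar * \<beta> t)"
  unfolding Y_def using prec[of "P!(n-1)" d t] P_edge[of "n-1"] n1 Pn fwd_last bwd_last by simp

lemma \<alpha>_eq: "\<alpha> t = X t / (X t + p t (s, Q!1))"
  unfolding \<alpha>_def X_def nu_f_def out_s using first_distinct by simp
lemma \<beta>_eq: "\<beta> t = Y t / (Y t + p t (Q!(k-1), d))"
  unfolding \<beta>_def Y_def nu_b_def in_d using last_distinct by simp

lemma X_nonneg: "X t \<ge> 0" unfolding X_def using p_nonneg P_edge[of 0] n1 P0 by simp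
lemma Y_nonneg: "Y t \<ge> 0" unfolding Y_def using p_nonneg P_edge[of "n-1"] n1 Pn by simp

lemma pos_all:
  assumes init: "\<forall>e \<in> path_edges P. p 0 e > 0"
  shows "i < n \<Longrightarrow> p t (P!i, P!Suc i) > 0"
proof (induction t)
  case 0
  have "(P!i, P!Suc i) \<in> path_edges P" using 0 lenP by (auto simp: path_edges_iff)
  thus ?case using init by auto
next
  case (Suc t)
  have "p (Suc t) (P!i, P!Suc i) \<ge> \<delta> * p t (P!i, P!Suc i)" using p_grow P_edge Suc.prems by blast
  moreover have "\<delta> * p t (P!i, P!Suc i) > 0" using Suc dl by simp
  ultimately show ?case by linarith
qed

lemma nu_f_edge:
  assumes init: "\<forall>e \<in> path_edges P. p 0 e > 0" and i: "i < n"
  shows "nu_f E (p t) (P!i) (P!Suc i) = (if i = 0 then \<alpha> t else 1)"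
proof (cases "i = 0")
  case True thus ?thesis unfolding \<alpha>_def using P0 by simp
next
  case False
  hence "0 < i" by simp
  thus ?thesis unfolding nu_f_def using out_internal[OF _ i] pos_all[OF init i, of t] False by simp
qed

lemma nu_b_edge:
  assumes init: "\<forall>e \<in> path_edges P. p 0 e > 0" and i: "i < n"
  shows "nu_b E (p t) (P!i) (P!Suc i) = (if Suc i = n then \<beta> t else 1)"
proof (cases "Suc i = n")
  case True
  hence "i = n - 1" by simp
  thus ?thesis unfolding \<beta>_def using Pn True by simp
next
  case False
  hence j: "0 < Suc i" "Suc i < n" using i by auto
  thus ?thesis unfolding nu_b_def using in_internal[OF j] pos_all[OF init i, of t] False by simp
qed

end

lemma antdyn_swap: "antdyn E s d P Q l \<delta> fbar bbar p f b \<Longrightarrow> antdyn E s d Q P l \<delta> fbar bbar p f b"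
proof -
  assume a: "antdyn E s d P Q l \<delta> fbar bbar p f b"
  hence "tpp E s d P Q" unfolding antdyn_def by simp
  hence t: "tpp E s d Q P" by (rule tpp_swap)
  have u: "set Q \<union> set P = set P \<union> set Q" by blast
  show ?thesis using a t unfolding antdyn_def antdyn_axioms_def u by simp
qed




lemma rate_to_log:
  fixes \<theta> V :: real and N :: nat
  assumes th: "0 < \<theta>" "\<theta> < 1" and V: "0 \<le> V" and N: "N > 0"
  shows "\<exists>C1>0. \<exists>C2>0. \<forall>\<epsilon>::real. 0 < \<epsilon> \<and> \<epsilon> < 1 \<longrightarrow>
           (\<forall>t::nat. real t \<ge> C1 + C2 * ln (1 / \<epsilon>) \<longrightarrow> V * \<theta> ^ (t div N) \<le> \<epsilon>)"
proof -
  define lam where "lam = - ln \<theta>"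
  have lam: "lam > 0" unfolding lam_def using th by simp
  define V' where "V' = max V 1"
  have V': "V' \<ge> 1" "V \<le> V'" unfolding V'_def by auto
  have lnV: "ln V' \<ge> 0" using V' by simp
  define C2 where "C2 = real N / lam"
  define C1 where "C1 = real N + real N * ln V' / lam"
  have C2: "C2 > 0" unfolding C2_def using lam N by simp
  have C1: "C1 > 0" unfolding C1_def using lam N lnV by (simp add: add_pos_nonneg)
  { fix \<epsilon> :: real and t :: nat
    assume e: "0 < \<epsilon>" "\<epsilon> < 1" and t: "real t \<ge> C1 + C2 * ln (1 / \<epsilon>)"
    define j where "j = t div N"
    have "t < N * (j + 1)" unfolding j_def using N
      by (metis add.commute div_mult_mod_eq mod_less_divisor nat_add_left_cancel_less distrib_left mult.commute mult_1_right)
    hence "real t < real N * (real j + 1)" by (metis of_nat_1 of_nat_add of_nat_less_iff of_nat_mult)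
    hence tj: "real t / real N - 1 < real j" using N by (simp add: field_simps)
    have "C1 + C2 * ln (1/\<epsilon>) = real N * (1 + (ln V' + ln (1/\<epsilon>)) / lam)"
      unfolding C1_def C2_def using lam by (simp add: field_simps)
    hence "real t / real N - 1 \<ge> (ln V' + ln (1/\<epsilon>)) / lam" using t N by (simp add: field_simps)
    hence "real j \<ge> (ln V' + ln (1/\<epsilon>)) / lam" using tj by linarith
    hence "real j * lam \<ge> ln V' + ln (1/\<epsilon>)" using lam by (simp add: field_simps)
    hence le: "real j * ln \<theta> \<le> ln \<epsilon> - ln V'" unfolding lam_def using e by (simp add: ln_div)
    have "\<theta> ^ j = exp (real j * ln \<theta>)" using th by (simp add: exp_of_nat_mult)
    also have "\<dots> \<le> exp (ln \<epsilon> - ln V')" using le by simp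
    also have "\<dots> = \<epsilon> / V'" using e V' by (simp add: exp_diff)
    finally have "\<theta> ^ j \<le> \<epsilon> / V'" .
    hence "V' * \<theta> ^ j \<le> \<epsilon>" using V' by (simp add: field_simps)
    moreover have "V * \<theta> ^ j \<le> V' * \<theta> ^ j" using V' th by (intro mult_right_mono) auto
    ultimately have "V * \<theta> ^ (t div N) \<le> \<epsilon>" unfolding j_def by simp }
  thus ?thesis using C1 C2 by blast
qed

lemma inv_ge: "(r::real) \<ge> 0 \<Longrightarrow> 1 - r \<le> 1 / (1 + r)"
  by (simp add: field_simps)

theorem theorem1:
  fixes E :: "('v \<times> 'v) set" and s d :: 'v and P1 P2 :: "'v list"
    and l :: "'v \<Rightarrow> real" and \<delta> fbar bbar :: real
    and p :: "nat \<Rightarrow> 'v \<times> 'v \<Rightarrow> real" and f b :: "nat \<Rightarrow> 'v \<Rightarrow> real"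
  assumes G: "two_parallel_paths E s d P1 P2"
    and leak: "\<forall>v \<in> set P1 \<union> set P2. 0 \<le> l v \<and> l v \<le> 1"
    and less: "path_leakage l s d P1 < path_leakage l s d P2"
    and delta: "0 < \<delta>" "\<delta> < 1"
    and inputs: "fbar > 0" "bbar > 0"
    and dyn: "ant_dynamics E s d l \<delta> (\<lambda>_. fbar) (\<lambda>_. bbar) p f b"
    and init: "\<forall>e \<in> path_edges P1. p 0 e > 0"
  shows "\<exists>C1 > 0. \<exists>C2 > 0. \<forall>\<epsilon>::real. 0 < \<epsilon> \<and> \<epsilon> < 1 \<longrightarrow>
           (\<forall>t::nat. real t \<ge> C1 + C2 * ln (1 / \<epsilon>) \<longrightarrow>
             (\<forall>(u, v) \<in> path_edges P1.
                nu_f E (p t) u v \<ge> 1 - \<epsilon> \<and> nu_b E (p t) u v \<ge> 1 - \<epsilon>))"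
proof -
  have ad: "antdyn E s d P1 P2 l \<delta> fbar bbar p f b"
    unfolding antdyn_def antdyn_axioms_def tpp_def using G leak delta inputs dyn by auto
  interpret A1: antdyn E s d P1 P2 l \<delta> fbar bbar p f b by (rule ad)
  interpret A2: antdyn E s d P2 P1 l \<delta> fbar bbar p f b by (rule antdyn_swap[OF ad])
  have nk: "A1.k = A2.n" "A2.k = A1.n" unfolding A1.k_def A2.n_def A2.k_def A1.n_def by simp_all
  define A where "A = A1.X" define B where "B = A2.X"
  define C where "C = A1.Y" define D where "D = A2.Y"
  define L where "L = max (A1.n - 1) (A2.n - 1)"
  have \<alpha>1: "A1.\<alpha> t = A t / (A t + B t)" for t
    unfolding A_def B_def using A1.\<alpha>_eq[of t] by (simp add: A2.X_def)
  have \<alpha>2: "A2.\<alpha> t = B t / (A t + B t)" for t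
    unfolding A_def B_def using A2.\<alpha>_eq[of t] by (simp add: A1.X_def add.commute)
  have \<beta>1: "A1.\<beta> t = C t / (C t + D t)" for t
    unfolding C_def D_def using A1.\<beta>_eq[of t] nk by (simp add: A2.Y_def)
  have \<beta>2: "A2.\<beta> t = D t / (C t + D t)" for t
    unfolding C_def D_def using A2.\<beta>_eq[of t] nk by (simp add: A1.Y_def add.commute)
  have pl: "path_leakage l s d P1 = 1 - A1.q" "path_leakage l s d P2 = 1 - A2.q"
    unfolding path_leakage_def A1.q_def A2.q_def by simp_all
  have q: "0 \<le> A2.q" "A2.q < A1.q" "A1.q \<le> 1" using A2.q_bounds A1.q_bounds less pl by auto
  have pos: "\<forall>n. A n > 0 \<and> C n > 0 \<and> B n \<ge> 0 \<and> D n \<ge> 0"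
  proof
    fix t
    have "A t > 0" unfolding A_def A1.X_def using A1.pos_all[OF init, of 0 t] A1.n1 A1.P0 by simp
    moreover have "C t > 0" unfolding C_def A1.Y_def using A1.pos_all[OF init, of "A1.n - 1" t] A1.n1 A1.Pn by simp
    ultimately show "A t > 0 \<and> C t > 0 \<and> B t \<ge> 0 \<and> D t \<ge> 0"
      unfolding B_def D_def using A2.X_nonneg A2.Y_nonneg by simp
  qed
  have recA: "\<forall>t\<ge>L. A (Suc t) = \<delta>*(A t + fbar*(A t/(A t+B t)) + A1.q*bbar*(C (t-(A1.n-1))/(C (t-(A1.n-1))+D (t-(A1.n-1)))))"
    using A1.recX unfolding L_def A_def[symmetric] by (simp add: \<alpha>1 \<beta>1)
  have recB: "\<forall>t\<ge>L. B (Suc t) = \<delta>*(B t + fbar*(B t/(A t+B t)) + A2.q*bbar*(D (t-(A2.n-1))/(C (t-(A2.n-1))+D (t-(A2.n-1)))))"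
    using A2.recX unfolding L_def B_def[symmetric] by (simp add: \<alpha>2 \<beta>2)
  have recC: "\<forall>t\<ge>L. C (Suc t) = \<delta>*(C t + bbar*(C t/(C t+D t)) + A1.q*fbar*(A (t-(A1.n-1))/(A (t-(A1.n-1))+B (t-(A1.n-1)))))"
    using A1.recY unfolding L_def C_def[symmetric] by (simp add: \<alpha>1 \<beta>1 algebra_simps)
  have recD: "\<forall>t\<ge>L. D (Suc t) = \<delta>*(D t + bbar*(D t/(C t+D t)) + A2.q*fbar*(B (t-(A2.n-1))/(A (t-(A2.n-1))+B (t-(A2.n-1)))))"
    using A2.recY unfolding L_def D_def[symmetric] by (simp add: \<alpha>2 \<beta>2 algebra_simps)
  obtain V \<theta> where V\<theta>: "0 < \<theta>" "\<theta> < 1" "0 \<le> V"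
    and bnd: "\<forall>n. B n / A n \<le> V * \<theta> ^ (n div Suc L) \<and> D n / C n \<le> V * \<theta> ^ (n div Suc L)"
    using decay[of "A1.n - 1" L "A2.n - 1" \<delta> fbar bbar "A2.q" "A1.q" A C B D] recA recB recC recD pos q
      delta inputs unfolding L_def by auto
  obtain C1 C2 where C: "C1 > 0" "C2 > 0" and CC: "\<forall>\<epsilon>::real. 0 < \<epsilon> \<and> \<epsilon> < 1 \<longrightarrow>
           (\<forall>t::nat. real t \<ge> C1 + C2 * ln (1 / \<epsilon>) \<longrightarrow> V * \<theta> ^ (t div Suc L) \<le> \<epsilon>)"
    using rate_to_log[OF V\<theta>, of "Suc L"] by auto
  have key: "1 - \<epsilon> \<le> nu_f E (p t) u v \<and> 1 - \<epsilon> \<le> nu_b E (p t) u v"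
    if e: "0 < \<epsilon> \<and> \<epsilon> < 1" and t: "real t \<ge> C1 + C2 * ln (1 / \<epsilon>)"
      and eP: "(u, v) \<in> path_edges P1" for \<epsilon> :: real and t :: nat and u v
  proof -
    have small: "B t / A t \<le> \<epsilon>" "D t / C t \<le> \<epsilon>" using bnd CC e t by (meson order_trans)+
    have af: "A1.\<alpha> t \<ge> 1 - \<epsilon>"
    proof -
      have "A1.\<alpha> t = 1 / (1 + B t / A t)"
      proof -
        have p: "A t > 0" "B t \<ge> 0" using pos by auto
        hence "1 + B t / A t = (A t + B t) / A t" by (simp add: field_simps)
        thus ?thesis unfolding \<alpha>1 using p by simp
      qed
      moreover have "1 - B t / A t \<le> 1 / (1 + B t / A t)" using pos[rule_format, of t] by (intro inv_ge) simp
      ultimately show ?thesis using small by linarith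
    qed
    have bf: "A1.\<beta> t \<ge> 1 - \<epsilon>"
    proof -
      have "A1.\<beta> t = 1 / (1 + D t / C t)"
      proof -
        have p: "C t > 0" "D t \<ge> 0" using pos by auto
        hence "1 + D t / C t = (C t + D t) / C t" by (simp add: field_simps)
        thus ?thesis unfolding \<beta>1 using p by simp
      qed
      moreover have "1 - D t / C t \<le> 1 / (1 + D t / C t)" using pos[rule_format, of t] by (intro inv_ge) simp
      ultimately show ?thesis using small by linarith
    qed
    obtain i where i0: "Suc i < length P1" "u = P1!i" "v = P1!Suc i"
      using eP unfolding path_edges_iff by blast
    have i: "Suc i < length P1" "(u, v) = (P1!i, P1!Suc i)" using i0 by auto
    have i': "i < A1.n" using i A1.lenP by simp
    show ?thesis
      unfolding i0(2,3) using A1.nu_f_edge[OF init i', of t] A1.nu_b_edge[OF init i', of t] af bf e by simp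
  qed
  show ?thesis using key C by blast
qed


end
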